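(* Let $M\in\mathcal{B}_{\infty}$ be such that $\mu(M)<\infty$. Then, $L^{p}(M,\mu)$ is separable for every $1\leq p <\infty$.
   Context: Let $\mathcal{B}$ be the Borel $\sigma$-algebra of $\mathbb{R}$, $\lambda$ the Lebesgue measure, and $\mathcal{B}_{\infty}$ the $\sigma$-algebra on $\mathbb{R}^{\mathbb{N}}$ generated by the cylinder sets $\prod_{i=1}^{m}C_{i}\times\prod_{i=m+1}^{\infty}\mathbb{R}$ with $C_i\in\mathcal{B}$, $m\in\mathbb{N}$. Let $\mathcal{F}(\mathcal{B},\lambda)$ be the set of finite rectangles $\prod_{i\in\mathbb{N}}C_{i}$ with $C_i\in\mathcal{B}$ and $\prod_{i}\lambda(C_i)\in[0,\infty)$, with $\mathrm{vol}(\prod_{i}C_i):=\prod_i\lambda(C_i)$. The measure $\mu$ is the restriction to $\mathcal{B}_{\infty}$ of the outer measure $\mu^{\ast}(A):=\inf\{\sum_{n}\mathrm{vol}(\mathscr{C}_{n}) : \mathscr{C}_{n}\in\mathcal{F}(\mathcal{B},\lambda),\ A\subset\bigcup_{n}\mathscr{C}_{n}\}$ ($\inf\varnothing=\infty$). *)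

theory Defs
  imports "HOL-Analysis.Analysis"
begin

definition cylinders :: "(nat \<Rightarrow> real) set set" where
  "cylinders = {{x. \<forall>i<m. x i \<in> C i} | m C. \<forall>i<m. C i \<in> sets borel}"

definition B_inf :: "(nat \<Rightarrow> real) set set" where
  "B_inf = sigma_sets UNIV cylinders"

definition rect_vol_conv :: "(nat \<Rightarrow> real set) \<Rightarrow> ennreal \<Rightarrow> bool" where
  "rect_vol_conv C v \<longleftrightarrow> (\<lambda>n. \<Prod>i<n. emeasure lborel (C i)) \<longlonglongrightarrow> v"

definition fin_rects :: "(nat \<Rightarrow> real set) set" where
  "fin_rects = {C. (\<forall>i. C i \<in> sets borel) \<and> (\<exists>v. rect_vol_conv C v \<and> v < \<infinity>)}"

definition rect :: "(nat \<Rightarrow> real set) \<Rightarrow> (nat \<Rightarrow> real) set" where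
  "rect C = {x. \<forall>i. x i \<in> C i}"

definition vol :: "(nat \<Rightarrow> real set) \<Rightarrow> ennreal" where
  "vol C = lim (\<lambda>n. \<Prod>i<n. emeasure lborel (C i))"

text \<open>Outer measure mu* (inf of the empty set is \<infinity> = top).\<close>
definition mu_outer :: "(nat \<Rightarrow> real) set \<Rightarrow> ennreal" where
  "mu_outer A = Inf {(\<Sum>n. vol (R n)) | R. (\<forall>n. R n \<in> fin_rects) \<and> A \<subseteq> (\<Union>n. rect (R n))}"

definition mu :: "(nat \<Rightarrow> real) measure" where
  "mu = measure_of UNIV cylinders mu_outer"

definition Lp_space :: "'a measure \<Rightarrow> real \<Rightarrow> ('a \<Rightarrow> real) set" where
  "Lp_space N p = {f. f \<in> borel_measurable N \<and> (\<integral>\<^sup>+ x. ennreal (\<bar>f x\<bar> powr p) \<partial>N) < \<infinity>}"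

definition Lp_dist :: "'a measure \<Rightarrow> real \<Rightarrow> ('a \<Rightarrow> real) \<Rightarrow> ('a \<Rightarrow> real) \<Rightarrow> real" where
  "Lp_dist N p f g = (enn2real (\<integral>\<^sup>+ x. ennreal (\<bar>f x - g x\<bar> powr p) \<partial>N)) powr (1 / p)"

definition Lp_separable :: "'a measure \<Rightarrow> real \<Rightarrow> bool" where
  "Lp_separable N p \<longleftrightarrow> (\<exists>D. countable D \<and> D \<subseteq> Lp_space N p \<and>
     (\<forall>f\<in>Lp_space N p. \<forall>e>0. \<exists>g\<in>D. Lp_dist N p f g < e))"

end

theory Submission
  imports Defs
begin


lemma powr_add_bound:
  fixes a b p :: real assumes "0 < p"
  shows "\<bar>a + b\<bar> powr p \<le> 2 powr p * (\<bar>a\<bar> powr p + \<bar>b\<bar> powr p)"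
proof -
  have "\<bar>a + b\<bar> \<le> 2 * max \<bar>a\<bar> \<bar>b\<bar>" by auto
  then have "\<bar>a + b\<bar> powr p \<le> (2 * max \<bar>a\<bar> \<bar>b\<bar>) powr p"
    using assms by (intro powr_mono2) auto
  also have "\<dots> = 2 powr p * max \<bar>a\<bar> \<bar>b\<bar> powr p" by (simp add: powr_mult)
  also have "max \<bar>a\<bar> \<bar>b\<bar> powr p \<le> \<bar>a\<bar> powr p + \<bar>b\<bar> powr p"
    by (cases "\<bar>a\<bar> \<le> \<bar>b\<bar>") (auto simp: max_def)
  finally show ?thesis by (simp add: mult_left_mono)
qed

lemma Ipow_add:
  fixes u v :: "'a \<Rightarrow> real" assumes "0 < p"
    and [measurable]: "u \<in> borel_measurable N" "v \<in> borel_measurable N"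
  shows "(\<integral>\<^sup>+x. ennreal (\<bar>u x + v x\<bar> powr p) \<partial>N) \<le>
     ennreal (2 powr p) * ((\<integral>\<^sup>+x. ennreal (\<bar>u x\<bar> powr p) \<partial>N) + (\<integral>\<^sup>+x. ennreal (\<bar>v x\<bar> powr p) \<partial>N))"
proof -
  have "(\<integral>\<^sup>+x. ennreal (\<bar>u x + v x\<bar> powr p) \<partial>N) \<le>
      (\<integral>\<^sup>+x. ennreal (2 powr p) * (ennreal (\<bar>u x\<bar> powr p) + ennreal (\<bar>v x\<bar> powr p)) \<partial>N)"
    by (intro nn_integral_mono)
       (simp add: ennreal_plus[symmetric] ennreal_mult[symmetric] ennreal_leI powr_add_bound[OF assms(1)] del: ennreal_plus)
  also have "\<dots> = ennreal (2 powr p) * ((\<integral>\<^sup>+x. ennreal (\<bar>u x\<bar> powr p) \<partial>N) + (\<integral>\<^sup>+x. ennreal (\<bar>v x\<bar> powr p) \<partial>N))"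
    by (subst nn_integral_cmult) (auto simp: nn_integral_add)
  finally show ?thesis .
qed

lemma ennreal_comb:
  fixes a b :: ennreal and x y c :: real
  assumes "a \<le> ennreal x" "b \<le> ennreal y" "0 \<le> x" "0 \<le> y" "0 \<le> c"
  shows "ennreal c * (a + b) \<le> ennreal (c * (x + y))"
proof -
  have "a + b \<le> ennreal (x + y)" using assms by (simp add: add_mono ennreal_plus)
  then have "ennreal c * (a + b) \<le> ennreal c * ennreal (x + y)" by (rule mult_left_mono) simp
  then show ?thesis using assms by (simp add: ennreal_mult)
qed


lemma Lp_sep_general:
  fixes N :: "'a measure" and A :: "'a set set" and p :: real
  assumes fin: "finite_measure N" and cA: "countable A"
    and Ameas: "\<And>a. a \<in> A \<Longrightarrow> a \<inter> space N \<in> sets N"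
    and approx: "\<And>S e. S \<in> sets N \<Longrightarrow> e > 0 \<Longrightarrow>
       \<exists>a\<in>A. emeasure N (((S - a) \<union> (a - S)) \<inter> space N) < ennreal e"
    and p1: "1 \<le> p"
  shows "Lp_separable N p"
proof -
  interpret finite_measure N by (rule fin)
  have p: "0 < p" using p1 by simp
  define D where "D = (\<lambda>l x. sum_list (map (\<lambda>(q,a). real_of_rat q * indicator a x) l)) ` lists (UNIV \<times> A)"
  define I where "I h = (\<integral>\<^sup>+x. ennreal (\<bar>h x\<bar> powr p) \<partial>N)" for h :: "'a \<Rightarrow> real"
  define Cl where "Cl h \<longleftrightarrow> h \<in> borel_measurable N \<and> (\<forall>e>0. \<exists>d\<in>D. I (\<lambda>x. h x - d x) < ennreal e)"
    for h :: "'a \<Rightarrow> real"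
  define c where "c = 2 powr p"
  have c: "c > 0" by (simp add: c_def)
  have ind_meas: "(\<lambda>x. indicator a x :: real) \<in> borel_measurable N" if "a \<in> A" for a
  proof -
    have "(\<lambda>x. indicator (a \<inter> space N) x :: real) \<in> borel_measurable N"
      using Ameas[OF that] by simp
    moreover have "(\<lambda>x. indicator a x :: real) \<in> borel_measurable N \<longleftrightarrow> (\<lambda>x. indicator (a \<inter> space N) x :: real) \<in> borel_measurable N"
      by (rule measurable_cong) (simp add: indicator_def)
    ultimately show ?thesis by simp
  qed
  have cD: "countable D" unfolding D_def using cA by auto
  have D_prop: "d \<in> borel_measurable N \<and> (\<exists>K. \<forall>x. \<bar>d x\<bar> \<le> K)" if "d \<in> D" for d
  proof -
    obtain l where l: "l \<in> lists (UNIV \<times> A)" and d: "d = (\<lambda>x. sum_list (map (\<lambda>(q,a). real_of_rat q * indicator a x) l))"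
      using \<open>d \<in> D\<close> unfolding D_def by auto
    have "(\<lambda>x. sum_list (map (\<lambda>(q,a). real_of_rat q * indicator a x) l)) \<in> borel_measurable N \<and>
        (\<exists>K. \<forall>x. \<bar>sum_list (map (\<lambda>(q,a). real_of_rat q * indicator a x) l)\<bar> \<le> K)"
      using l
    proof (induction l)
      case Nil then show ?case by auto
    next
      case (Cons qa l)
      obtain q a where qa: "qa = (q, a)" by fastforce
      have aA: "a \<in> A" using Cons qa by auto
      from Cons obtain K where K: "\<forall>x. \<bar>sum_list (map (\<lambda>(q,a). real_of_rat q * indicator a x) l)\<bar> \<le> K"
        and m: "(\<lambda>x. sum_list (map (\<lambda>(q,a). real_of_rat q * indicator a x) l)) \<in> borel_measurable N" by auto
      have "(\<lambda>x. real_of_rat q * indicator a x + sum_list (map (\<lambda>(q,a). real_of_rat q * indicator a x) l)) \<in> borel_measurable N"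
        using m ind_meas[OF aA] by measurable
      moreover have "\<forall>x. \<bar>real_of_rat q * indicator a x + sum_list (map (\<lambda>(q,a). real_of_rat q * indicator a x) l)\<bar> \<le> \<bar>real_of_rat q\<bar> + K"
      proof
        fix x
        have "\<bar>real_of_rat q * indicator a x\<bar> \<le> \<bar>real_of_rat q\<bar>" by (auto simp: indicator_def)
        then show "\<bar>real_of_rat q * indicator a x + sum_list (map (\<lambda>(q,a). real_of_rat q * indicator a x) l)\<bar> \<le> \<bar>real_of_rat q\<bar> + K"
          using K[rule_format, of x] by linarith
      qed
      ultimately show ?case using qa by auto
    qed
    then show ?thesis using d by simp
  qed
  have D_add: "(\<lambda>x. d1 x + d2 x) \<in> D" if d12: "d1 \<in> D" "d2 \<in> D" for d1 d2
  proof -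
    obtain l1 where d1: "d1 = (\<lambda>x. sum_list (map (\<lambda>(q,a). real_of_rat q * indicator a x) l1))" and l1: "l1 \<in> lists (UNIV \<times> A)"
      using d12(1) unfolding D_def by (rule imageE)
    obtain l2 where d2: "d2 = (\<lambda>x. sum_list (map (\<lambda>(q,a). real_of_rat q * indicator a x) l2))" and l2: "l2 \<in> lists (UNIV \<times> A)"
      using d12(2) unfolding D_def by (rule imageE)
    show ?thesis unfolding D_def using l1 l2 d1 d2
      by (intro image_eqI[where x="l1 @ l2"]) auto
  qed
  have D_zero: "(\<lambda>x. 0) \<in> D" unfolding D_def by (intro image_eqI[where x="[]"]) auto
  have D_single: "(\<lambda>x. real_of_rat q * indicator a x) \<in> D" if "a \<in> A" for q a
    unfolding D_def using that by (intro image_eqI[where x="[(q,a)]"]) auto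
  have D_Lp: "d \<in> Lp_space N p" if dD: "d \<in> D" for d
  proof -
    obtain K where K: "\<forall>x. \<bar>d x\<bar> \<le> K" and m: "d \<in> borel_measurable N" using D_prop[OF dD] by auto
    have "I d \<le> (\<integral>\<^sup>+x. ennreal (K powr p) \<partial>N)" unfolding I_def
      using K p by (intro nn_integral_mono ennreal_leI powr_mono2) auto
    also have "\<dots> < \<infinity>" using emeasure_finite[of "space N"] by (simp add: ennreal_mult_eq_top_iff less_top[symmetric])
    finally show ?thesis using m unfolding Lp_space_def I_def by auto
  qed
  have I_meas: "(\<lambda>x. ennreal (\<bar>h x\<bar> powr p)) \<in> borel_measurable N" if "h \<in> borel_measurable N" for h
    using that by measurable
  have Cl_limit: "Cl h" if hm: "h \<in> borel_measurable N"
    and H: "\<And>e. e > 0 \<Longrightarrow> \<exists>k. Cl k \<and> I (\<lambda>x. h x - k x) < ennreal e" for h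
    unfolding Cl_def
  proof (intro conjI allI impI hm)
    fix e :: real assume e: "e > 0"
    define e' where "e' = e / (4 * c)"
    have e': "e' > 0" using e c by (simp add: e'_def)
    obtain k where k: "Cl k" and hk: "I (\<lambda>x. h x - k x) < ennreal e'" using H[OF e'] by auto
    obtain d where d: "d \<in> D" and kd: "I (\<lambda>x. k x - d x) < ennreal e'" using k e' unfolding Cl_def by auto
    have km: "k \<in> borel_measurable N" using k unfolding Cl_def by auto
    have dm: "d \<in> borel_measurable N" using D_prop[OF d] by auto
    have "I (\<lambda>x. h x - d x) = I (\<lambda>x. (h x - k x) + (k x - d x))" by (simp add: I_def)
    also have "\<dots> \<le> ennreal c * (I (\<lambda>x. h x - k x) + I (\<lambda>x. k x - d x))"
      unfolding I_def c_def using hm km dm by (intro Ipow_add[OF p] borel_measurable_diff)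
    also have "\<dots> \<le> ennreal (c * (e' + e'))"
      using hk kd e' c by (intro ennreal_comb) auto
    also have "\<dots> < ennreal e" using e c by (intro ennreal_lessI) (auto simp: e'_def field_simps)
    finally show "\<exists>d\<in>D. I (\<lambda>x. h x - d x) < ennreal e" using d by auto
  qed
  have Cl_add: "Cl (\<lambda>x. a x + b x)" if ab: "Cl a" "Cl b" for a b
    unfolding Cl_def
  proof (intro conjI allI impI)
    show "(\<lambda>x. a x + b x) \<in> borel_measurable N" using ab unfolding Cl_def by auto
    fix e :: real assume e: "e > 0"
    define e' where "e' = e / (4 * c)"
    have e': "e' > 0" using e c by (simp add: e'_def)
    obtain d1 where d1: "d1 \<in> D" and ad: "I (\<lambda>x. a x - d1 x) < ennreal e'" using ab e' unfolding Cl_def by auto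
    obtain d2 where d2: "d2 \<in> D" and bd: "I (\<lambda>x. b x - d2 x) < ennreal e'" using ab e' unfolding Cl_def by auto
    have am: "a \<in> borel_measurable N" "b \<in> borel_measurable N" using ab unfolding Cl_def by auto
    have dm: "d1 \<in> borel_measurable N" "d2 \<in> borel_measurable N" using D_prop[OF d1] D_prop[OF d2] by auto
    have "I (\<lambda>x. (a x + b x) - (d1 x + d2 x)) = I (\<lambda>x. (a x - d1 x) + (b x - d2 x))" by (simp add: I_def algebra_simps)
    also have "\<dots> \<le> ennreal c * (I (\<lambda>x. a x - d1 x) + I (\<lambda>x. b x - d2 x))"
      unfolding I_def c_def using am dm by (intro Ipow_add[OF p] borel_measurable_diff)
    also have "\<dots> \<le> ennreal (c * (e' + e'))"
      using ad bd e' c by (intro ennreal_comb) auto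
    also have "\<dots> < ennreal e" using e c by (intro ennreal_lessI) (auto simp: e'_def field_simps)
    finally show "\<exists>d\<in>D. I (\<lambda>x. (a x + b x) - d x) < ennreal e" using D_add[OF d1 d2] by auto
  qed
  have Cl_zero: "Cl (\<lambda>x. 0)" unfolding Cl_def
    using D_zero by (auto intro!: bexI[where x="\<lambda>x. 0"] simp: I_def p)
  have Cl_cong: "Cl h'" if "Cl h" and eq: "\<And>x. x \<in> space N \<Longrightarrow> h x = h' x" for h h'
  proof -
    have "h' \<in> borel_measurable N \<longleftrightarrow> h \<in> borel_measurable N"
      by (rule measurable_cong) (simp add: eq)
    moreover have "I (\<lambda>x. h' x - d x) = I (\<lambda>x. h x - d x)" for d
      unfolding I_def by (rule nn_integral_cong) (simp add: eq)
    ultimately show ?thesis using that(1) unfolding Cl_def by auto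
  qed
  have Cl_rat_ind: "Cl (\<lambda>x. real_of_rat q * indicator S x)" if S: "S \<in> sets N" for q S
    unfolding Cl_def
  proof (intro conjI allI impI)
    show "(\<lambda>x. real_of_rat q * indicator S x) \<in> borel_measurable N" using S by measurable
    fix e :: real assume e: "e > 0"
    define cq where "cq = \<bar>real_of_rat q\<bar> powr p"
    have cq: "cq \<ge> 0" by (simp add: cq_def)
    define e' where "e' = e / (cq + 1)"
    have e': "e' > 0" using e cq by (simp add: e'_def)
    obtain a where aA: "a \<in> A" and a: "emeasure N (((S - a) \<union> (a - S)) \<inter> space N) < ennreal e'"
      using approx[OF S e'] by auto
    define X where "X = ((S - a) \<union> (a - S)) \<inter> space N"
    have Ssp: "S \<subseteq> space N" using sets.sets_into_space[OF S] .
    have "X = (S - (a \<inter> space N)) \<union> ((a \<inter> space N) - S)" using Ssp by (auto simp: X_def)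
    then have X: "X \<in> sets N" using S Ameas[OF aA] by auto
    have "I (\<lambda>x. real_of_rat q * indicator S x - real_of_rat q * indicator a x) =
        (\<integral>\<^sup>+x. ennreal cq * indicator X x \<partial>N)"
      unfolding I_def by (rule nn_integral_cong) (auto simp: indicator_def X_def cq_def p)
    also have "\<dots> = ennreal cq * emeasure N X" using X by (rule nn_integral_cmult_indicator)
    also have "\<dots> \<le> ennreal cq * ennreal e'" using a unfolding X_def
      by (intro mult_left_mono) auto
    also have "\<dots> = ennreal (cq * e')" using cq by (simp add: ennreal_mult')
    also have "\<dots> < ennreal e" using e cq by (intro ennreal_lessI) (auto simp: e'_def field_simps)
    finally show "\<exists>d\<in>D. I (\<lambda>x. real_of_rat q * indicator S x - d x) < ennreal e"
      using D_single[OF aA, of q] by auto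
  qed
  define m where "m = measure N (space N)"
  have m: "m \<ge> 0" by (simp add: m_def)
  have Cl_real_ind: "Cl (\<lambda>x. r * indicator S x)" if S: "S \<in> sets N" for r S
  proof (rule Cl_limit)
    show "(\<lambda>x. r * indicator S x) \<in> borel_measurable N" using S by measurable
    fix e :: real assume e: "e > 0"
    define \<eta> where "\<eta> = (e / (m + 1)) powr (1 / p)"
    have \<eta>: "\<eta> > 0" using e m by (simp add: \<eta>_def)
    obtain q where q1: "r < real_of_rat q" and q2: "real_of_rat q < r + \<eta>"
      using of_rat_dense[of r "r + \<eta>"] \<eta> by auto
    have "\<bar>r - real_of_rat q\<bar> powr p < \<eta> powr p"
      using q1 q2 p by (intro powr_less_mono2) auto
    also have "\<eta> powr p = e / (m + 1)" using e m p by (simp add: \<eta>_def powr_powr)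
    finally have lt: "\<bar>r - real_of_rat q\<bar> powr p < e / (m + 1)" .
    have "I (\<lambda>x. r * indicator S x - real_of_rat q * indicator S x) \<le>
        (\<integral>\<^sup>+x. ennreal (\<bar>r - real_of_rat q\<bar> powr p) \<partial>N)"
      unfolding I_def by (intro nn_integral_mono ennreal_leI) (auto simp: indicator_def p)
    also have "\<dots> = ennreal (\<bar>r - real_of_rat q\<bar> powr p * m)"
      by (simp add: m_def emeasure_eq_measure ennreal_mult)
    also have "\<dots> < ennreal e"
    proof (intro ennreal_lessI e)
      have "\<bar>r - real_of_rat q\<bar> powr p * m \<le> e / (m + 1) * m"
        using lt m by (intro mult_right_mono) auto
      also have "\<dots> < e" using e m by (simp add: field_simps)
      finally show "\<bar>r - real_of_rat q\<bar> powr p * m < e" .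
    qed
    finally show "\<exists>k. Cl k \<and> I (\<lambda>x. r * indicator S x - k x) < ennreal e"
      using Cl_rat_ind[OF S, of q] by auto
  qed
  have Cl_sum: "Cl (\<lambda>x. \<Sum>y\<in>F. c y * indicator (S y) x)"
    if "finite F" "\<forall>y\<in>F. S y \<in> sets N" for F :: "real set" and c S
    using that
  proof (induction F rule: finite_induct)
    case empty then show ?case using Cl_zero by simp
  next
    case (insert y F)
    have "Cl (\<lambda>x. c y * indicator (S y) x + (\<Sum>y\<in>F. c y * indicator (S y) x))"
    proof -
      have Sy: "S y \<in> sets N" using insert(4) by simp
      have "\<forall>y\<in>F. S y \<in> sets N" using insert(4) by simp
      then have "Cl (\<lambda>x. \<Sum>y\<in>F. c y * indicator (S y) x)" by (rule insert(3))
      then show ?thesis by (rule Cl_add[OF Cl_real_ind[OF Sy]])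
    qed
    then show ?case by (simp only: sum.insert[OF insert(1) insert(2)])
  qed
  have Cl_simple: "Cl s" if s: "simple_function N s" for s
  proof (rule Cl_cong)
    show "Cl (\<lambda>x. \<Sum>y\<in>s ` space N. y * indicator (s -` {y} \<inter> space N) x)"
      proof -
        have fin: "finite (s ` space N)" using simple_functionD(1)[OF s] .
        have ms: "\<forall>y\<in>s ` space N. s -` {y} \<inter> space N \<in> sets N" using simple_functionD(2)[OF s] by blast
        show ?thesis by (rule Cl_sum[OF fin ms, where c="\<lambda>y. y"])
      qed
    fix x assume "x \<in> space N"
    have "s x = (\<Sum>y\<in>s ` space N. indicator (s -` {y} \<inter> space N) x *\<^sub>R y)"
      by (rule simple_function_indicator_representation_banach[OF s \<open>x \<in> space N\<close>])
    then show "(\<Sum>y\<in>s ` space N. y * indicator (s -` {y} \<inter> space N) x) = s x"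
      by (simp only: real_scaleR_def mult.commute)
  qed
  have Cl_Lp: "Cl f" if f: "f \<in> Lp_space N p" for f
  proof -
    have fm[measurable]: "f \<in> borel_measurable N" and fI: "I f < \<infinity>"
      using f unfolding Lp_space_def I_def by auto
    obtain F where Fs: "\<And>i. simple_function N (F i)"
      and Fc: "\<And>x. x \<in> space N \<Longrightarrow> (\<lambda>i. F i x) \<longlonglongrightarrow> f x"
      and Fb: "\<And>i x. x \<in> space N \<Longrightarrow> dist (F i x) 0 \<le> 2 * dist (f x) 0"
      using borel_measurable_implies_sequence_metric[OF fm, of 0] by blast
    have Fm[measurable]: "\<And>i. F i \<in> borel_measurable N"
      using Fs by (rule borel_measurable_simple_function)
    have lim: "(\<lambda>i. I (\<lambda>x. f x - F i x)) \<longlonglongrightarrow> (\<integral>\<^sup>+x. 0 \<partial>N)"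
      unfolding I_def
    proof (rule nn_integral_dominated_convergence[where w="\<lambda>x. ennreal (3 powr p * \<bar>f x\<bar> powr p)"])
      show "\<And>i. (\<lambda>x. ennreal (\<bar>f x - F i x\<bar> powr p)) \<in> borel_measurable N" by measurable
      show "(\<lambda>x. 0::ennreal) \<in> borel_measurable N" by simp
      show "(\<lambda>x. ennreal (3 powr p * \<bar>f x\<bar> powr p)) \<in> borel_measurable N" by measurable
      show "AE x in N. ennreal (\<bar>f x - F j x\<bar> powr p) \<le> ennreal (3 powr p * \<bar>f x\<bar> powr p)" for j
      proof (rule AE_I2)
        fix x assume x: "x \<in> space N"
        have "\<bar>f x - F j x\<bar> \<le> 3 * \<bar>f x\<bar>" using Fb[OF x, of j] by (simp add: dist_real_def)
        then have "\<bar>f x - F j x\<bar> powr p \<le> (3 * \<bar>f x\<bar>) powr p" using p by (intro powr_mono2) auto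
        also have "\<dots> = 3 powr p * \<bar>f x\<bar> powr p" by (simp add: powr_mult)
        finally show "ennreal (\<bar>f x - F j x\<bar> powr p) \<le> ennreal (3 powr p * \<bar>f x\<bar> powr p)"
          by (rule ennreal_leI)
      qed
      have "(\<integral>\<^sup>+x. ennreal (3 powr p * \<bar>f x\<bar> powr p) \<partial>N) = ennreal (3 powr p) * I f"
        unfolding I_def by (subst nn_integral_cmult[symmetric]) (auto simp: ennreal_mult)
      also have "\<dots> < \<infinity>" using fI by (simp add: ennreal_mult_less_top)
      finally show "(\<integral>\<^sup>+x. ennreal (3 powr p * \<bar>f x\<bar> powr p) \<partial>N) < \<infinity>" .
      show "AE x in N. (\<lambda>i. ennreal (\<bar>f x - F i x\<bar> powr p)) \<longlonglongrightarrow> 0"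
      proof (rule AE_I2)
        fix x assume x: "x \<in> space N"
        have "(\<lambda>i. f x - F i x) \<longlonglongrightarrow> f x - f x" by (intro tendsto_intros Fc[OF x])
        then have "(\<lambda>i. \<bar>f x - F i x\<bar>) \<longlonglongrightarrow> 0" using tendsto_rabs_zero by fastforce
        then have "(\<lambda>i. \<bar>f x - F i x\<bar> powr p) \<longlonglongrightarrow> 0"
          using p by (intro tendsto_zero_powrI[where b=p]) auto
        then have "(\<lambda>i. ennreal (\<bar>f x - F i x\<bar> powr p)) \<longlonglongrightarrow> ennreal 0"
          by (rule tendsto_ennrealI)
        then show "(\<lambda>i. ennreal (\<bar>f x - F i x\<bar> powr p)) \<longlonglongrightarrow> 0" by simp
      qed
    qed
    then have lim0: "(\<lambda>i. I (\<lambda>x. f x - F i x)) \<longlonglongrightarrow> 0" by simp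
    show ?thesis
    proof (rule Cl_limit[OF fm])
      fix e :: real assume e: "e > 0"
      then have "0 < ennreal e" by simp
      from order_tendstoD(2)[OF lim0 this] obtain i where "I (\<lambda>x. f x - F i x) < ennreal e"
        by (auto dest: eventually_happens)
      then show "\<exists>k. Cl k \<and> I (\<lambda>x. f x - k x) < ennreal e" using Cl_simple[OF Fs] by auto
    qed
  qed
  show ?thesis unfolding Lp_separable_def
  proof (intro exI conjI ballI allI impI)
    show "countable D" by (rule cD)
    show "D \<subseteq> Lp_space N p" using D_Lp by auto
    fix f e assume f: "f \<in> Lp_space N p" and e: "(e::real) > 0"
    have "e powr p > 0" using e by simp
    then obtain d where d: "d \<in> D" and fd: "I (\<lambda>x. f x - d x) < ennreal (e powr p)"
      using Cl_Lp[OF f] unfolding Cl_def by blast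
    have "enn2real (I (\<lambda>x. f x - d x)) < e powr p"
    proof -
      have "I (\<lambda>x. f x - d x) < top" using fd ennreal_less_top order.strict_trans by blast
      then show ?thesis using fd by simp
    qed
    then have "enn2real (I (\<lambda>x. f x - d x)) powr (1 / p) < (e powr p) powr (1 / p)"
      using p by (intro powr_less_mono2) auto
    also have "\<dots> = e" using e p by (simp add: powr_powr)
    finally show "\<exists>g\<in>D. Lp_dist N p f g < e" using d unfolding Lp_dist_def I_def by auto
  qed
qed



datatype sexpr = SB nat | SC sexpr | SU sexpr sexpr | SE

instance sexpr :: countable by countable_datatype

primrec sev :: "(nat \<Rightarrow> 'a set) \<Rightarrow> sexpr \<Rightarrow> 'a set" where
  "sev g (SB n) = g n"
| "sev g (SC t) = - sev g t"
| "sev g (SU t1 t2) = sev g t1 \<union> sev g t2"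
| "sev g SE = {}"

lemma sets_mu: "sets mu = B_inf"
  unfolding mu_def B_inf_def by (rule sets_measure_of) auto

lemma space_mu: "space mu = UNIV"
  unfolding mu_def by (simp add: space_measure_of_conv)

lemma B_inf_sigma: "sigma_algebra UNIV B_inf"
  unfolding B_inf_def by (rule sigma_algebra_sigma_sets) auto

lemma B_inf_generated:
  obtains G :: "(nat \<Rightarrow> real) set set" where "countable G" "G \<noteq> {}"
    "sigma_sets UNIV G = B_inf"
proof -
  obtain B :: "real set set" where cB: "countable B" and tB: "topological_basis B"
    using ex_countable_basis by blast
  define G where "G = insert {} ((\<lambda>(i,U). {x :: nat \<Rightarrow> real. x i \<in> U}) ` (UNIV \<times> B))"
  have cG: "countable G" unfolding G_def using cB by auto
  interpret SG: sigma_algebra "UNIV" "sigma_sets UNIV G"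
    by (rule sigma_algebra_sigma_sets) auto
  interpret SB: sigma_algebra "UNIV" B_inf by (rule B_inf_sigma)
  have G_sub: "G \<subseteq> B_inf"
  proof
    fix X assume "X \<in> G"
    then consider "X = {}" | i U where "U \<in> B" "X = {x. x i \<in> U}" unfolding G_def by (elim insertE imageE) (auto split: prod.splits)
    then show "X \<in> B_inf"
    proof cases
      case 1 then show ?thesis by simp
    next
      case (2 i U)
      have "open U" using tB \<open>U \<in> B\<close> by (rule topological_basis_open)
      then have "U \<in> sets borel" by simp
      have "X = {x. \<forall>j<Suc i. x j \<in> (if j = i then U else UNIV)}" using 2 by auto
      moreover have "\<forall>j<Suc i. (if j = i then U else UNIV) \<in> sets borel" using \<open>U \<in> sets borel\<close> by auto
      ultimately have "X \<in> cylinders" unfolding cylinders_def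
        by (intro CollectI exI[of _ "Suc i"] exI[of _ "\<lambda>j. if j = i then U else UNIV"] conjI)
      then show ?thesis unfolding B_inf_def by auto
    qed
  qed
  have sB: "sets borel = sigma_sets UNIV B"
    by (subst borel_eq_countable_basis[OF cB tB]) (simp add: sets_measure_of)
  have coord: "{x :: nat \<Rightarrow> real. x i \<in> C} \<in> sigma_sets UNIV G" if "C \<in> sets borel" for i C
  proof -
    have "C \<in> sigma_sets UNIV B" using that sB by simp
    then show ?thesis
    proof induction
      case (Basic a)
      have "{x :: nat \<Rightarrow> real. x i \<in> a} \<in> G" unfolding G_def using Basic
        by (intro insertI2 image_eqI[where x="(i,a)"]) auto
      then show ?case by (rule sigma_sets.Basic)
    next
      case Empty then show ?case by simp
    next
      case (Compl a)
      have "{x :: nat \<Rightarrow> real. x i \<in> UNIV - a} = UNIV - {x. x i \<in> a}" by auto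
      then show ?case using Compl by (simp add: SG.compl_sets)
    next
      case (Union A)
      have eq: "{x :: nat \<Rightarrow> real. x i \<in> \<Union>(range A)} = (\<Union>n. {x. x i \<in> A n})" by auto
      have "(\<Union>n. {x. x i \<in> A n}) \<in> sigma_sets UNIV G" by (rule sigma_sets.Union) (rule Union.IH)
      then show ?case unfolding eq .
    qed
  qed
  have cyl: "cylinders \<subseteq> sigma_sets UNIV G"
  proof
    fix X assume "X \<in> cylinders"
    then obtain m C where X: "X = {x. \<forall>i<m. x i \<in> C i}" and C: "\<forall>i<m. C i \<in> sets borel"
      unfolding cylinders_def by auto
    have "{x :: nat \<Rightarrow> real. \<forall>i<k. x i \<in> C i} \<in> sigma_sets UNIV G" if "k \<le> m" for k
      using that
    proof (induction k)
      case 0 then show ?case by simp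
    next
      case (Suc k)
      have "{x :: nat \<Rightarrow> real. \<forall>i<Suc k. x i \<in> C i} = {x. \<forall>i<k. x i \<in> C i} \<inter> {x. x k \<in> C k}"
        by (auto simp: less_Suc_eq)
      then show ?case using Suc C coord[of "C k" k] by (simp add: SG.Int)
    qed
    then show "X \<in> sigma_sets UNIV G" using X by simp
  qed
  have "sigma_sets UNIV G = B_inf"
  proof
    show "sigma_sets UNIV G \<subseteq> B_inf"
      using G_sub by (rule SB.sigma_sets_subset)
    show "B_inf \<subseteq> sigma_sets UNIV G" unfolding B_inf_def using cyl by (rule sigma_sets_mono)
  qed
  moreover have "G \<noteq> {}" unfolding G_def by simp
  ultimately show ?thesis using that cG by blast
qed


theorem lemma2p3:
  fixes M :: "(nat \<Rightarrow> real) set" and p :: real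
  assumes "M \<in> B_inf" and "emeasure mu M < \<infinity>" and "1 \<le> p"
  shows "Lp_separable (restrict_space mu M) p"
proof -
  obtain G where cG: "countable G" and G0: "G \<noteq> {}" and SG: "sigma_sets UNIV G = B_inf"
    by (rule B_inf_generated)
  define g where "g = from_nat_into G"
  have rg: "range g = G" using G0 cG by (simp add: g_def)
  define Alg where "Alg = range (sev g)"
  interpret SB: sigma_algebra UNIV B_inf by (rule B_inf_sigma)
  have gB: "g n \<in> B_inf" for n
  proof -
    have "g n \<in> G" using rg by auto
    then show ?thesis using SG by auto
  qed
  have Alg_B: "sev g t \<in> B_inf" for t
  proof (induction t)
    case (SB n) then show ?case using gB by simp
  next
    case (SC t)
    have "- sev g t = UNIV - sev g t" by auto
    then show ?case using SC by (simp add: SB.compl_sets)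
  next
    case (SU t1 t2) then show ?case by (simp add: SB.Un)
  next
    case SE then show ?case by simp
  qed
  have AlgB: "a \<in> B_inf" if "a \<in> Alg" for a using that Alg_B unfolding Alg_def by auto
  have Alg_empty: "{} \<in> Alg" unfolding Alg_def by (metis sev.simps(4) rangeI)
  have Alg_compl: "- a \<in> Alg" if aA: "a \<in> Alg" for a
  proof -
    obtain t where "a = sev g t" using aA unfolding Alg_def by auto
    then have "- a = sev g (SC t)" by simp
    then show ?thesis unfolding Alg_def by (metis rangeI)
  qed
  have Alg_Un: "a \<union> b \<in> Alg" if ab: "a \<in> Alg" "b \<in> Alg" for a b
  proof -
    obtain t1 where "a = sev g t1" using ab(1) unfolding Alg_def by auto
    moreover obtain t2 where "b = sev g t2" using ab(2) unfolding Alg_def by auto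
    ultimately have "a \<union> b = sev g (SU t1 t2)" by simp
    then show ?thesis unfolding Alg_def by (metis rangeI)
  qed
  have Alg_G: "S \<in> Alg" if SG': "S \<in> G" for S
  proof -
    obtain n where "S = g n" using rg SG' by auto
    then have "S = sev g (SB n)" by simp
    then show ?thesis unfolding Alg_def by (metis rangeI)
  qed
  define N where "N = restrict_space mu M"
  have M: "M \<in> sets mu" using assms(1) sets_mu by simp
  have spN: "space N = M" unfolding N_def by (simp add: space_restrict_space space_mu)
  have setsN: "X \<in> sets N \<longleftrightarrow> X \<subseteq> M \<and> X \<in> B_inf" for X
    unfolding N_def using M by (subst sets_restrict_space_iff) (auto simp: space_mu sets_mu)
  have emN: "emeasure N X = emeasure mu X" if "X \<subseteq> M" for X
    unfolding N_def using M that by (intro emeasure_restrict_space) (auto simp: space_mu)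
  have finN: "finite_measure N"
  proof (rule finite_measureI)
    show "emeasure N (space N) \<noteq> \<infinity>" using assms(2) by (simp add: spN emN)
  qed
  interpret finite_measure N by (rule finN)
  have inN: "X \<inter> M \<in> sets N" if "X \<in> B_inf" for X using setsN that assms(1) SB.Int by auto
  have P: "\<forall>e>0. \<exists>a\<in>Alg. measure N (((S - a) \<union> (a - S)) \<inter> M) < e" if "S \<in> sigma_sets UNIV G" for S
    using that
  proof induction
    case (Basic S)
    then have "S \<in> Alg" by (rule Alg_G)
    then show ?case by (intro allI impI bexI[of _ S]) auto
  next
    case Empty
    show ?case using Alg_empty by (intro allI impI bexI[of _ "{}"]) auto
  next
    case (Compl S)
    show ?case
    proof (intro allI impI)
      fix e :: real assume e: "e > 0"
      then obtain a where a: "a \<in> Alg" and m: "measure N (((S - a) \<union> (a - S)) \<inter> M) < e"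
        using Compl.IH by blast
      have "((UNIV - S) - (- a)) \<union> ((- a) - (UNIV - S)) = (S - a) \<union> (a - S)" by auto
      then show "\<exists>a\<in>Alg. measure N ((((UNIV - S) - a) \<union> (a - (UNIV - S))) \<inter> M) < e"
        using Alg_compl[OF a] m by (intro bexI[of _ "- a"]) auto
    qed
  next
    case (Union A)
    have AB: "A i \<in> B_inf" for i using Union.hyps SG by auto
    show ?case
    proof (intro allI impI)
      fix e :: real assume e: "e > 0"
      define T where "T k = (\<Union>i<k. A i) \<inter> M" for k
      have TB: "(\<Union>i<k. A i) \<in> B_inf" for k using AB by (intro SB.finite_UN) auto
      have Tsets: "range T \<subseteq> sets N" unfolding T_def using TB inN by auto
      have incT: "incseq T" unfolding T_def incseq_def by (auto intro: order.strict_trans2)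
      have UT: "(\<Union>k. T k) = (\<Union>(range A)) \<inter> M" unfolding T_def by auto
      have UAB: "\<Union>(range A) \<in> B_inf" using AB by (intro SB.countable_UN) auto
      define L where "L = measure N (\<Union>(range A) \<inter> M)"
      have lim: "(\<lambda>k. measure N (T k)) \<longlonglongrightarrow> L"
        using finite_Lim_measure_incseq[OF Tsets incT] UT by (simp add: L_def)
      have e2: "e / 2 > 0" using e by simp
      from LIMSEQ_D[OF lim e2] obtain k where "norm (measure N (T k) - L) < e / 2" by auto
      then have k: "L - measure N (T k) < e / 2" unfolding real_norm_def by linarith
      define e' where "e' = e / (2 * (real k + 1))"
      have e': "e' > 0" using e by (simp add: e'_def)
      have "\<forall>i. \<exists>b. b \<in> Alg \<and> measure N (((A i - b) \<union> (b - A i)) \<inter> M) < e'"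
        using Union.IH e' by blast
      then obtain a where aA: "\<And>i. a i \<in> Alg"
        and am: "\<And>i. measure N (((A i - a i) \<union> (a i - A i)) \<inter> M) < e'" by metis
      have UA: "(\<Union>i<j. a i) \<in> Alg" for j
      proof (induction j)
        case 0 then show ?case using Alg_empty by simp
      next
        case (Suc j)
        have "(\<Union>i<Suc j. a i) = (\<Union>i<j. a i) \<union> a j" by (auto simp: lessThan_Suc)
        then show ?case using Alg_Un[OF Suc aA[of j]] by simp
      qed
      define U where "U = (\<Union>i<k. a i)"
      define Y where "Y = (\<Union>(range A) \<inter> M) - T k"
      define Z where "Z i = ((A i - a i) \<union> (a i - A i)) \<inter> M" for i
      have UB: "U \<in> B_inf" unfolding U_def using UA AlgB by auto
      have Zs: "Z i \<in> sets N" for i unfolding Z_def using AB AlgB[OF aA[of i]] by (intro inN) auto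
      have Ys: "Y \<in> sets N" unfolding Y_def using inN[OF UAB] Tsets by auto
      have ZUs: "(\<Union>i<k. Z i) \<in> sets N" using Zs by auto
      have sub: "((\<Union>(range A) - U) \<union> (U - \<Union>(range A))) \<inter> M \<subseteq> Y \<union> (\<Union>i<k. Z i)"
        unfolding Y_def Z_def U_def T_def by auto
      have "measure N (((\<Union>(range A) - U) \<union> (U - \<Union>(range A))) \<inter> M) \<le> measure N (Y \<union> (\<Union>i<k. Z i))"
        using sub Ys ZUs by (intro finite_measure_mono) auto
      also have "\<dots> \<le> measure N Y + measure N (\<Union>i<k. Z i)"
        using Ys ZUs by (rule measure_Un_le)
      also have "measure N (\<Union>i<k. Z i) \<le> (\<Sum>i<k. measure N (Z i))"
        using Zs by (intro measure_subadditive_finite) auto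
      also have "(\<Sum>i<k. measure N (Z i)) \<le> (\<Sum>i<k. e')"
        using am by (intro sum_mono less_imp_le) (simp add: Z_def)
      also have "(\<Sum>i<k. e') = real k * e'" by simp
      also have "real k * e' \<le> e / 2" using e by (simp add: e'_def field_simps)
      also have "measure N Y = L - measure N (T k)"
        unfolding Y_def L_def using inN[OF UAB] Tsets
        by (subst finite_measure_Diff) (auto simp: T_def)
      finally have "measure N (((\<Union>(range A) - U) \<union> (U - \<Union>(range A))) \<inter> M) < e"
        using k by linarith
      then show "\<exists>a\<in>Alg. measure N (((\<Union>(range A) - a) \<union> (a - \<Union>(range A))) \<inter> M) < e"
        using UA[of k] unfolding U_def by blast
    qed
  qed
  have "Lp_separable N p"
  proof (rule Lp_sep_general[OF finN, where A=Alg])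
    show "countable Alg" unfolding Alg_def by (rule countable_image) (rule countableI_type)
    show "a \<inter> space N \<in> sets N" if "a \<in> Alg" for a using inN AlgB[OF that] spN by simp
    show "1 \<le> p" by (rule assms(3))
    fix S e assume S: "S \<in> sets N" and e: "(e::real) > 0"
    then have "S \<in> sigma_sets UNIV G" using setsN SG by auto
    from P[OF this, rule_format, OF e] obtain a where a: "a \<in> Alg"
      and m: "measure N (((S - a) \<union> (a - S)) \<inter> M) < e" by blast
    have "emeasure N (((S - a) \<union> (a - S)) \<inter> space N) = ennreal (measure N (((S - a) \<union> (a - S)) \<inter> M))"
      by (simp add: spN emeasure_eq_measure)
    also have "\<dots> < ennreal e" using m e by (intro ennreal_lessI) auto
    finally show "\<exists>a\<in>Alg. emeasure N (((S - a) \<union> (a - S)) \<inter> space N) < ennreal e" using a by blast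
  qed
  then show ?thesis unfolding N_def .
qed

end
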